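(* Let $N\ge 1$ and let $\lambda,\mu$ be complex parameters. Consider fields $x,\widetilde{x},\widehat{x},\widehat{\widetilde{x}}\in\mathbb{C}^N$ with indices taken modulo $N$. Suppose that $x,\widetilde{x},\widehat{x}$ satisfy, for all $k$, $$(E)\qquad \frac{\widetilde{x}_k-x_k+\lambda}{\widetilde{x}_k-x_k-\lambda}\cdot\frac{x_k-\widetilde{x}_{k-1}+\lambda}{x_k-\widetilde{x}_{k-1}-\lambda}=\frac{\widehat{x}_k-x_k+\mu}{\widehat{x}_k-x_k-\mu}\cdot\frac{x_k-\widehat{x}_{k-1}+\mu}{x_k-\widehat{x}_{k-1}-\mu}.$$ Consider the superposition formulas $$(S1)\quad \mu(\widehat{\widetilde{x}}_k-\widehat{x}_k)(x_{k+1}-\widetilde{x}_k)-\lambda(\widehat{\widetilde{x}}_k-\widetilde{x}_k)(x_{k+1}-\widehat{x}_k)+\lambda\mu(\lambda-\mu)=0,$$ $$(S2)\quad \mu(\widetilde{x}_{k+1}-x_{k+1})(\widehat{x}_{k+1}-\widehat{\widetilde{x}}_k)-\lambda(\widehat{x}_{k+1}-x_{k+1})(\widetilde{x}_{k+1}-\widehat{\widetilde{x}}_k)+\lambda\mu(\lambda-\mu)=0.$$ Then, by virtue of $(E)$, (S1) and (S2) are equivalent, and if $\widehat{\widetilde{x}}$ is defined by either of them, then for all $k$: $$(E_1)\quad \frac{\widetilde{x}_k-x_k+\lambda}{\widetilde{x}_k-x_k-\lambda}\cdot\frac{x_{k+1}-\widetilde{x}_k+\lambda}{x_{k+1}-\widetilde{x}_k-\lambda}=\frac{\widehat{\widetilde{x}}_k-\widetilde{x}_k+\mu}{\widehat{\widetilde{x}}_k-\widetilde{x}_k-\mu}\cdot\frac{\widetilde{x}_k-\widehat{\widetilde{x}}_{k-1}+\mu}{\widetilde{x}_k-\widehat{\widetilde{x}}_{k-1}-\mu},$$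 $$(E_2)\quad \frac{\widehat{x}_k-x_k+\mu}{\widehat{x}_k-x_k-\mu}\cdot\frac{x_{k+1}-\widehat{x}_k+\mu}{x_{k+1}-\widehat{x}_k-\mu}=\frac{\widehat{\widetilde{x}}_k-\widehat{x}_k+\lambda}{\widehat{\widetilde{x}}_k-\widehat{x}_k-\lambda}\cdot\frac{\widehat{x}_k-\widehat{\widetilde{x}}_{k-1}+\lambda}{\widehat{x}_k-\widehat{\widetilde{x}}_{k-1}-\lambda},$$ $$(E_{12})\quad \frac{\widehat{\widetilde{x}}_k-\widehat{x}_k+\lambda}{\widehat{\widetilde{x}}_k-\widehat{x}_k-\lambda}\cdot\frac{\widehat{x}_{k+1}-\widehat{\widetilde{x}}_k+\lambda}{\widehat{x}_{k+1}-\widehat{\widetilde{x}}_k-\lambda}=\frac{\widehat{\widetilde{x}}_k-\widetilde{x}_k+\mu}{\widehat{\widetilde{x}}_k-\widetilde{x}_k-\mu}\cdot\frac{\widetilde{x}_{k+1}-\widehat{\widetilde{x}}_k+\mu}{\widetilde{x}_{k+1}-\widehat{\widetilde{x}}_k-\mu}.$$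
   Context: These are the corner equations for two Bäcklund transformations $F_\lambda,F_\mu$ of the periodic symmetric rational multiplicative Toda-type system $\ddot x_k=-(\dot x_k^2-1)\big(\frac{1}{x_{k+1}-x_k}-\frac{1}{x_k-x_{k-1}}\big)$, where $F_\lambda:(x,p)\mapsto(\widetilde x,\widetilde p)$ is $e^{2p_k}=\frac{\widetilde x_k-x_k+\lambda}{\widetilde x_k-x_k-\lambda}\cdot\frac{x_k-\widetilde x_{k-1}+\lambda}{x_k-\widetilde x_{k-1}-\lambda}$, $e^{2\widetilde p_k}=\frac{\widetilde x_k-x_k+\lambda}{\widetilde x_k-x_k-\lambda}\cdot\frac{x_{k+1}-\widetilde x_k+\lambda}{x_{k+1}-\widetilde x_k-\lambda}$; hats denote the action of $F_\mu$. *)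

theory Defs
  imports Complex_Main
begin

end

theory Submission
  imports Defs
begin

definition cub :: "complex \<Rightarrow> complex \<Rightarrow> complex \<Rightarrow> complex \<Rightarrow> complex \<Rightarrow> complex \<Rightarrow> complex" where
"cub l m A B C D = l*(A+B)*C*D - m*A*B*(C+D) + l*m*(m*(A+B) - l*(C+D))"

lemma frac_cub:
  fixes l m A B C D :: complex
  assumes "A - l \<noteq> 0" "B - l \<noteq> 0" "C - m \<noteq> 0" "D - m \<noteq> 0"
  shows "(A+l)/(A-l) * ((B+l)/(B-l)) = (C+m)/(C-m)*((D+m)/(D-m)) \<longleftrightarrow> cub l m A B C D = 0"
proof -
  have d: "(A+l)*(B+l)*((C-m)*(D-m)) - (C+m)*(D+m)*((A-l)*(B-l)) = 2*cub l m A B C D"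
    unfolding cub_def by algebra
  have "(A+l)/(A-l) * ((B+l)/(B-l)) = ((A+l)*(B+l))/((A-l)*(B-l))" by simp
  moreover have "(C+m)/(C-m)*((D+m)/(D-m)) = ((C+m)*(D+m))/((C-m)*(D-m))" by simp
  moreover have "((A+l)*(B+l))/((A-l)*(B-l)) = ((C+m)*(D+m))/((C-m)*(D-m)) \<longleftrightarrow>
        (A+l)*(B+l)*((C-m)*(D-m)) = (C+m)*(D+m)*((A-l)*(B-l))"
    using assms by (simp add: frac_eq_eq)
  ultimately show ?thesis using d by (metis eq_iff_diff_eq_0 mult_eq_0_iff zero_neq_numeral)
qed

lemma E1p:
  fixes l m x0 x1 tm t0 hm h0 X X' :: complex
  assumes s1: "m*(X-h0)*(x1-t0) - l*(X-t0)*(x1-h0) + l*m*(l-m) = 0"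
    and s1': "m*(X'-hm)*(x0-tm) - l*(X'-tm)*(x0-hm) + l*m*(l-m) = 0"
    and e: "cub l m (t0-x0) (x0-tm) (h0-x0) (x0-hm) = 0"
    and c1: "m*(x1-t0) - l*(x1-h0) \<noteq> 0"
    and c1': "m*(x0-tm) - l*(x0-hm) \<noteq> 0"
  shows "cub l m (t0-x0) (x1-t0) (X-t0) (t0-X') = 0"
  using assms unfolding cub_def by algebra

lemma E2p:
  fixes l m x0 x1 tm t0 hm h0 X X' :: complex
  assumes s1: "m*(X-h0)*(x1-t0) - l*(X-t0)*(x1-h0) + l*m*(l-m) = 0"
    and s1': "m*(X'-hm)*(x0-tm) - l*(X'-tm)*(x0-hm) + l*m*(l-m) = 0"
    and e: "cub l m (t0-x0) (x0-tm) (h0-x0) (x0-hm) = 0"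
    and c1: "m*(x1-t0) - l*(x1-h0) \<noteq> 0"
    and c1': "m*(x0-tm) - l*(x0-hm) \<noteq> 0"
  shows "cub m l (h0-x0) (x1-h0) (X-h0) (h0-X') = 0"
  using assms unfolding cub_def by algebra

lemma S12p:
  fixes l m x1 t0 t1 h0 h1 X :: complex
  assumes e: "cub l m (t1-x1) (x1-t0) (h1-x1) (x1-h0) = 0"
    and c1: "m*(x1-t0) - l*(x1-h0) \<noteq> 0"
    and c2: "l*(h1-x1) - m*(t1-x1) \<noteq> 0"
  shows "m*(X-h0)*(x1-t0) - l*(X-t0)*(x1-h0) + l*m*(l-m) = 0 \<longleftrightarrow>
         m*(t1-x1)*(h1-X) - l*(h1-x1)*(t1-X) + l*m*(l-m) = 0"
proof
  assume "m*(X-h0)*(x1-t0) - l*(X-t0)*(x1-h0) + l*m*(l-m) = 0"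
  then show "m*(t1-x1)*(h1-X) - l*(h1-x1)*(t1-X) + l*m*(l-m) = 0"
    using assms unfolding cub_def by algebra
next
  assume "m*(t1-x1)*(h1-X) - l*(h1-x1)*(t1-X) + l*m*(l-m) = 0"
  then show "m*(X-h0)*(x1-t0) - l*(X-t0)*(x1-h0) + l*m*(l-m) = 0"
    using assms unfolding cub_def by algebra
qed

lemma E12p:
  fixes l m x1 t0 t1 h0 h1 X :: complex
  assumes s1: "m*(X-h0)*(x1-t0) - l*(X-t0)*(x1-h0) + l*m*(l-m) = 0"
    and s2: "m*(t1-x1)*(h1-X) - l*(h1-x1)*(t1-X) + l*m*(l-m) = 0"
    and e: "cub l m (t1-x1) (x1-t0) (h1-x1) (x1-h0) = 0"
    and c1: "m*(x1-t0) - l*(x1-h0) \<noteq> 0"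
    and c2: "l*(h1-x1) - m*(t1-x1) \<noteq> 0"
  shows "cub l m (X-h0) (h1-X) (X-t0) (t1-X) = 0"
  using assms unfolding cub_def by algebra


theorem theorem13:
  fixes N :: nat and lam mu :: complex
    and x xt xh xht :: "int \<Rightarrow> complex"
  assumes N: "N \<ge> 1"
    and per_x: "\<forall>k. x (k + int N) = x k"
    and per_xt: "\<forall>k. xt (k + int N) = xt k"
    and per_xh: "\<forall>k. xh (k + int N) = xh k"
    and per_xht: "\<forall>k. xht (k + int N) = xht k"
    \<comment> \<open>non-degeneracy: all denominators occurring in (E), (E1), (E2), (E12) are nonzero\<close>
    and nd_E: "\<forall>k. xt k - x k - lam \<noteq> 0 \<and> x k - xt (k - 1) - lam \<noteq> 0
                  \<and> xh k - x k - mu \<noteq> 0 \<and> x k - xh (k - 1) - mu \<noteq> 0"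
    and nd_E12: "\<forall>k. x (k + 1) - xt k - lam \<noteq> 0 \<and> x (k + 1) - xh k - mu \<noteq> 0
                  \<and> xht k - xt k - mu \<noteq> 0 \<and> xt k - xht (k - 1) - mu \<noteq> 0
                  \<and> xht k - xh k - lam \<noteq> 0 \<and> xh k - xht (k - 1) - lam \<noteq> 0
                  \<and> xh (k + 1) - xht k - lam \<noteq> 0 \<and> xt (k + 1) - xht k - mu \<noteq> 0"
    \<comment> \<open>xht is uniquely determined by (S1), resp. by (S2): the coefficient of xht k is nonzero\<close>
    and nd_S1: "\<forall>k. mu * (x (k + 1) - xt k) - lam * (x (k + 1) - xh k) \<noteq> 0"
    and nd_S2: "\<forall>k. lam * (xh (k + 1) - x (k + 1)) - mu * (xt (k + 1) - x (k + 1)) \<noteq> 0"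
    and E: "\<forall>k. (xt k - x k + lam) / (xt k - x k - lam) * ((x k - xt (k - 1) + lam) / (x k - xt (k - 1) - lam))
              = (xh k - x k + mu) / (xh k - x k - mu) * ((x k - xh (k - 1) + mu) / (x k - xh (k - 1) - mu))"
  shows "((\<forall>k. mu * (xht k - xh k) * (x (k + 1) - xt k) - lam * (xht k - xt k) * (x (k + 1) - xh k)
                + lam * mu * (lam - mu) = 0)
         \<longleftrightarrow>
         (\<forall>k. mu * (xt (k + 1) - x (k + 1)) * (xh (k + 1) - xht k) - lam * (xh (k + 1) - x (k + 1)) * (xt (k + 1) - xht k)
                + lam * mu * (lam - mu) = 0))
       \<and> ((\<forall>k. mu * (xht k - xh k) * (x (k + 1) - xt k) - lam * (xht k - xt k) * (x (k + 1) - xh k)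
                + lam * mu * (lam - mu) = 0)
         \<longrightarrow>
         (\<forall>k.
           (xt k - x k + lam) / (xt k - x k - lam) * ((x (k + 1) - xt k + lam) / (x (k + 1) - xt k - lam))
             = (xht k - xt k + mu) / (xht k - xt k - mu) * ((xt k - xht (k - 1) + mu) / (xt k - xht (k - 1) - mu))
         \<and> (xh k - x k + mu) / (xh k - x k - mu) * ((x (k + 1) - xh k + mu) / (x (k + 1) - xh k - mu))
             = (xht k - xh k + lam) / (xht k - xh k - lam) * ((xh k - xht (k - 1) + lam) / (xh k - xht (k - 1) - lam))
         \<and> (xht k - xh k + lam) / (xht k - xh k - lam) * ((xh (k + 1) - xht k + lam) / (xh (k + 1) - xht k - lam))
             = (xht k - xt k + mu) / (xht k - xt k - mu) * ((xt (k + 1) - xht k + mu) / (xt (k + 1) - xht k - mu))))"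
proof -
  have Ec: "cub lam mu (xt k - x k) (x k - xt (k - 1)) (xh k - x k) (x k - xh (k - 1)) = 0" for k
    using E nd_E frac_cub by blast
  have Ec1: "cub lam mu (xt (k+1) - x (k+1)) (x (k+1) - xt k) (xh (k+1) - x (k+1)) (x (k+1) - xh k) = 0" for k
    using Ec[of "k+1"] by simp
  have eqv: "(mu * (xht k - xh k) * (x (k + 1) - xt k) - lam * (xht k - xt k) * (x (k + 1) - xh k)
                + lam * mu * (lam - mu) = 0) \<longleftrightarrow>
             (mu * (xt (k + 1) - x (k + 1)) * (xh (k + 1) - xht k) - lam * (xh (k + 1) - x (k + 1)) * (xt (k + 1) - xht k)
                + lam * mu * (lam - mu) = 0)" for k
    using S12p[OF Ec1[of k]] nd_S1 nd_S2 by blast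
  show ?thesis
  proof (intro conjI impI allI)
    show "(\<forall>k. mu * (xht k - xh k) * (x (k + 1) - xt k) - lam * (xht k - xt k) * (x (k + 1) - xh k)
                + lam * mu * (lam - mu) = 0)
         \<longleftrightarrow>
         (\<forall>k. mu * (xt (k + 1) - x (k + 1)) * (xh (k + 1) - xht k) - lam * (xh (k + 1) - x (k + 1)) * (xt (k + 1) - xht k)
                + lam * mu * (lam - mu) = 0)" using eqv by blast
  next
    fix k
    assume S: "\<forall>k. mu * (xht k - xh k) * (x (k + 1) - xt k) - lam * (xht k - xt k) * (x (k + 1) - xh k)
                + lam * mu * (lam - mu) = 0"
    have s0: "mu * (xht k - xh k) * (x (k + 1) - xt k) - lam * (xht k - xt k) * (x (k + 1) - xh k)
                + lam * mu * (lam - mu) = 0" using S by blast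
    have sm: "mu * (xht (k-1) - xh (k-1)) * (x k - xt (k-1)) - lam * (xht (k-1) - xt (k-1)) * (x k - xh (k-1))
                + lam * mu * (lam - mu) = 0" using S[rule_format, of "k-1"] by simp
    have s2: "mu * (xt (k + 1) - x (k + 1)) * (xh (k + 1) - xht k) - lam * (xh (k + 1) - x (k + 1)) * (xt (k + 1) - xht k)
                + lam * mu * (lam - mu) = 0" using s0 eqv by blast
    have c0: "mu * (x (k + 1) - xt k) - lam * (x (k + 1) - xh k) \<noteq> 0" using nd_S1 by blast
    have cm: "mu * (x k - xt (k-1)) - lam * (x k - xh (k-1)) \<noteq> 0" using nd_S1[rule_format, of "k-1"] by simp
    have c2: "lam * (xh (k + 1) - x (k + 1)) - mu * (xt (k + 1) - x (k + 1)) \<noteq> 0" using nd_S2 by blast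
    have g1: "cub lam mu (xt k - x k) (x (k+1) - xt k) (xht k - xt k) (xt k - xht (k - 1)) = 0"
      by (rule E1p[OF s0 sm Ec[of k] c0 cm])
    have g2: "cub mu lam (xh k - x k) (x (k+1) - xh k) (xht k - xh k) (xh k - xht (k - 1)) = 0"
      by (rule E2p[OF s0 sm Ec[of k] c0 cm])
    have g3: "cub lam mu (xht k - xh k) (xh (k+1) - xht k) (xht k - xt k) (xt (k+1) - xht k) = 0"
      by (rule E12p[OF s0 s2 Ec1[of k] c0 c2])
    show "(xt k - x k + lam) / (xt k - x k - lam) * ((x (k + 1) - xt k + lam) / (x (k + 1) - xt k - lam))
             = (xht k - xt k + mu) / (xht k - xt k - mu) * ((xt k - xht (k - 1) + mu) / (xt k - xht (k - 1) - mu))"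
      using frac_cub g1 nd_E nd_E12 by blast
    show "(xh k - x k + mu) / (xh k - x k - mu) * ((x (k + 1) - xh k + mu) / (x (k + 1) - xh k - mu))
             = (xht k - xh k + lam) / (xht k - xh k - lam) * ((xh k - xht (k - 1) + lam) / (xh k - xht (k - 1) - lam))"
      using frac_cub g2 nd_E nd_E12 by blast
    show "(xht k - xh k + lam) / (xht k - xh k - lam) * ((xh (k + 1) - xht k + lam) / (xh (k + 1) - xht k - lam))
             = (xht k - xt k + mu) / (xht k - xt k - mu) * ((xt (k + 1) - xht k + mu) / (xt (k + 1) - xht k - mu))"
      using frac_cub g3 nd_E nd_E12 by blast
  qed
qed

end
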